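(* Let $\mathcal G=(\mathcal V,\mathcal E)$ be a connected graph on $n$ vertices, $M\ge2$, $\mathcal X=\{0,\dots,M-1\}$ with a group operation $+$. For $k\ge1$ define \[ \mathcal A_k=\Big\{\boldsymbol w\in\mathcal X^n,\ \boldsymbol w\neq\mathbf 0:\ \big|\{(i,j)\in\mathcal E: i>j,\ w_i-w_j\neq 0\}\big|<k\cdot\mathsf{mincut}\Big\}. \] Then for any $k\le n^2/\mathsf{mincut}$, \[ \frac{\log|\mathcal A_k|}{k}<2\log M+2\log(2k\cdot\mathsf{mincut})+4\tau^{\mathrm{cut}}\le2\log M+4\log(2n)+4\tau^{\mathrm{cut}}. \]
   Context: $x_i-x_j:=x_i+(-x_j)$, and $\mathbf 0$ denotes the vector whose entries are all the identity element $0$. $e(\mathcal S,\mathcal S^{\mathrm c})$ is the number of edges between $\mathcal S$ and $\mathcal V\setminus\mathcal S$; $\mathsf{mincut}=\min_{\emptyset\ne\mathcal S\subsetneq\mathcal V}e(\mathcal S,\mathcal S^{\mathrm c})$; $\mathcal N(m)=\{\mathcal S\subseteq\mathcal V:e(\mathcal S,\mathcal S^{\mathrm c})\le m\}$; $\tau^{\mathrm{cut}}=\max_k\frac1k\log|\mathcal N(k\cdot\mathsf{mincut})|$ over positive integers $k$. *)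

theory Defs
  imports Complex_Main "HOL-Algebra.Group" "HOL-Library.FuncSet"
begin

text \<open>A graph on vertex set {0..<n} is given by a symmetric irreflexive edge relation
  E on {0..<n}; each undirected edge {i,j} appears as both (i,j) and (j,i).\<close>

definition simple_graph :: "nat \<Rightarrow> (nat \<times> nat) set \<Rightarrow> bool" where
  "simple_graph n E \<longleftrightarrow> E \<subseteq> {0..<n} \<times> {0..<n} \<and> sym E \<and> irrefl E"

definition graph_connected :: "nat \<Rightarrow> (nat \<times> nat) set \<Rightarrow> bool" where
  "graph_connected n E \<longleftrightarrow> (\<forall>i<n. \<forall>j<n. (i, j) \<in> E\<^sup>*)"

definition cut_size :: "nat \<Rightarrow> (nat \<times> nat) set \<Rightarrow> nat set \<Rightarrow> nat" where
  "cut_size n E S = card {(i, j) \<in> E. i \<in> S \<and> j \<in> {0..<n} - S}"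

definition mincut :: "nat \<Rightarrow> (nat \<times> nat) set \<Rightarrow> nat" where
  "mincut n E = Min {cut_size n E S | S. S \<noteq> {} \<and> S \<subset> {0..<n}}"

definition Ncut :: "nat \<Rightarrow> (nat \<times> nat) set \<Rightarrow> nat \<Rightarrow> nat set set" where
  "Ncut n E m = {S. S \<subseteq> {0..<n} \<and> cut_size n E S \<le> m}"

text \<open>tau^cut = max over positive integers k of (1/k) log |N(k * mincut)|
  (the maximum is attained, so it equals the supremum).\<close>
definition tau_cut :: "nat \<Rightarrow> (nat \<times> nat) set \<Rightarrow> real" where
  "tau_cut n E = Sup {ln (real (card (Ncut n E (k * mincut n E)))) / real k | k::nat. k \<ge> 1}"

definition A_set :: "(nat, 'b) monoid_scheme \<Rightarrow> nat \<Rightarrow> (nat \<times> nat) set \<Rightarrow> nat \<Rightarrow> (nat \<Rightarrow> nat) set" where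
  "A_set G n E k = {w \<in> {0..<n} \<rightarrow>\<^sub>E carrier G.
      (\<exists>i<n. w i \<noteq> \<one>\<^bsub>G\<^esub>) \<and>
      card {(i, j) \<in> E. i > j \<and> w i \<otimes>\<^bsub>G\<^esub> inv\<^bsub>G\<^esub> (w j) \<noteq> \<one>\<^bsub>G\<^esub>} < k * mincut n E}"

end

theory Submission
  imports Defs
begin



lemma Ncut_basic:
  assumes "simple_graph n E"
  shows "finite (Ncut n E m)" "{} \<in> Ncut n E m" "card (Ncut n E m) \<ge> 1"
    "card (Ncut n E m) \<le> 2 ^ n"
proof -
  have sub: "Ncut n E m \<subseteq> Pow {0..<n}" unfolding Ncut_def by auto
  show f: "finite (Ncut n E m)" using sub finite_subset by blast
  show e: "{} \<in> Ncut n E m" unfolding Ncut_def cut_size_def by simp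
  show "card (Ncut n E m) \<ge> 1" using f e
    by (metis One_nat_def Suc_leI card_gt_0_iff empty_iff)
  have "card (Ncut n E m) \<le> card (Pow {0..<n})" using sub by (intro card_mono) auto
  then show "card (Ncut n E m) \<le> 2 ^ n" by (simp add: card_Pow)
qed

lemma tau_facts:
  assumes "simple_graph n E"
  shows "tau_cut n E \<ge> 0"
    and "j \<ge> 1 \<Longrightarrow> real (card (Ncut n E (j * mincut n E))) \<le> exp (real j * tau_cut n E)"
proof -
  define F where "F = {ln (real (card (Ncut n E (k * mincut n E)))) / real k | k::nat. k \<ge> 1}"
  have tc: "tau_cut n E = Sup F" unfolding tau_cut_def F_def by simp
  have mem: "ln (real (card (Ncut n E (k * mincut n E)))) / real k \<in> F" if "k \<ge> 1" for k
    unfolding F_def using that by blast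
  have bdd: "bdd_above F"
  proof (rule bdd_aboveI)
    fix x assume "x \<in> F"
    then obtain k where k: "k \<ge> 1" and x: "x = ln (real (card (Ncut n E (k * mincut n E)))) / real k"
      unfolding F_def by blast
    let ?c = "real (card (Ncut n E (k * mincut n E)))"
    have c1: "?c \<ge> 1" using Ncut_basic(3)[OF assms] by simp
    have c2: "?c \<le> 2 ^ n" using Ncut_basic(4)[OF assms, of "k * mincut n E"]
      by (metis of_nat_le_iff of_nat_numeral of_nat_power)
    have l0: "ln ?c \<ge> 0" using c1 by simp
    have "x \<le> ln ?c / 1" unfolding x using l0 k by (intro divide_left_mono) auto
    also have "\<dots> \<le> ln (2 ^ n)" using c1 c2 by simp
    finally show "x \<le> ln (2 ^ n)" .
  qed
  have up: "ln (real (card (Ncut n E (k * mincut n E)))) / real k \<le> tau_cut n E" if "k \<ge> 1" for k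
    unfolding tc using cSup_upper[OF mem[OF that] bdd] .
  have "0 \<le> ln (real (card (Ncut n E (1 * mincut n E)))) / real (1::nat)"
    using Ncut_basic(3)[OF assms] by simp
  then show "tau_cut n E \<ge> 0" using up[of 1] by linarith
  assume j: "j \<ge> 1"
  let ?c = "real (card (Ncut n E (j * mincut n E)))"
  have c1: "?c \<ge> 1" using Ncut_basic(3)[OF assms] by simp
  have "ln ?c \<le> real j * tau_cut n E" using up[OF j] j by (simp add: divide_le_eq mult.commute)
  then have "exp (ln ?c) \<le> exp (real j * tau_cut n E)" by simp
  then show "?c \<le> exp (real j * tau_cut n E)" using c1 by simp
qed

lemma geo_half: "(\<Sum>j\<in>{1..B}. (1/2::real)^j) = 1 - (1/2)^B"
  by (induction B) (auto simp: atLeastAtMostSuc_conv)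



lemma lt_div_succ: "(d::nat) > 0 \<Longrightarrow> m < (m div d + 1) * d"
  by (metis add.commute div_mult_mod_eq mod_less_divisor mult.commute nat_add_left_cancel_less
      distrib_right mult_1)

lemma sum_weight:
  assumes sg: "simple_graph n E" and mc: "mincut n E \<ge> 1"
  shows "(\<Sum>S\<in>Pow {0..<n}. (exp (- tau_cut n E) / 2) ^ (cut_size n E S div mincut n E + 1)) \<le> 1"
proof -
  define q where "q = exp (- tau_cut n E) / 2"
  define jf where "jf S = cut_size n E S div mincut n E + 1" for S
  let ?P = "Pow {0..<n}"
  have fP: "finite ?P" by simp
  have "(\<Sum>S\<in>?P. q ^ jf S) = (\<Sum>j\<in>jf ` ?P. \<Sum>S\<in>{S\<in>?P. jf S = j}. q ^ jf S)"
    by (rule sum.image_gen[OF fP])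
  also have "\<dots> = (\<Sum>j\<in>jf ` ?P. real (card {S\<in>?P. jf S = j}) * q ^ j)"
    by (intro sum.cong refl) simp
  also have "\<dots> \<le> (\<Sum>j\<in>jf ` ?P. (1/2) ^ j)"
  proof (intro sum_mono)
    fix j assume "j \<in> jf ` ?P"
    then have j1: "j \<ge> 1" unfolding jf_def by auto
    have sub: "{S\<in>?P. jf S = j} \<subseteq> Ncut n E (j * mincut n E)"
    proof
      fix S assume S: "S \<in> {S\<in>?P. jf S = j}"
      have "cut_size n E S < (cut_size n E S div mincut n E + 1) * mincut n E"
        using mc by (intro lt_div_succ) auto
      then show "S \<in> Ncut n E (j * mincut n E)" using S unfolding Ncut_def jf_def by auto
    qed
    have "card {S\<in>?P. jf S = j} \<le> card (Ncut n E (j * mincut n E))"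
      using sub Ncut_basic(1)[OF sg] by (rule card_mono[rotated])
    then have c: "real (card {S\<in>?P. jf S = j}) \<le> exp (real j * tau_cut n E)"
      using tau_facts(2)[OF sg j1] by linarith
    have qj: "q ^ j = exp (- (real j * tau_cut n E)) * (1/2)^j"
      unfolding q_def by (simp add: power_divide exp_of_nat_mult[symmetric] divide_simps)
    have "real (card {S\<in>?P. jf S = j}) * q ^ j \<le> exp (real j * tau_cut n E) * q ^ j"
      using c unfolding q_def by (intro mult_right_mono) auto
    also have "\<dots> = (1/2)^j" unfolding qj by (simp add: exp_minus field_simps)
    finally show "real (card {S\<in>?P. jf S = j}) * q ^ j \<le> (1/2) ^ j" .
  qed
  also have "\<dots> \<le> (\<Sum>j\<in>{1..Max (jf ` ?P)}. (1/2::real) ^ j)"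
    using fP by (intro sum_mono2) (auto simp: jf_def)
  also have "\<dots> \<le> 1" unfolding geo_half by simp
  finally show ?thesis unfolding q_def jf_def .
qed



lemma grp_neq:
  assumes "group G" "x \<in> carrier G" "y \<in> carrier G"
  shows "(x \<otimes>\<^bsub>G\<^esub> inv\<^bsub>G\<^esub> y \<noteq> \<one>\<^bsub>G\<^esub>) \<longleftrightarrow> x \<noteq> y"
proof
  assume "x \<otimes>\<^bsub>G\<^esub> inv\<^bsub>G\<^esub> y \<noteq> \<one>\<^bsub>G\<^esub>" then show "x \<noteq> y"
    using assms group.r_inv by fastforce
next
  assume ne: "x \<noteq> y"
  show "x \<otimes>\<^bsub>G\<^esub> inv\<^bsub>G\<^esub> y \<noteq> \<one>\<^bsub>G\<^esub>"
  proof
    assume h: "x \<otimes>\<^bsub>G\<^esub> inv\<^bsub>G\<^esub> y = \<one>\<^bsub>G\<^esub>"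
    have "x = (x \<otimes>\<^bsub>G\<^esub> inv\<^bsub>G\<^esub> y) \<otimes>\<^bsub>G\<^esub> y"
      using assms by (simp add: group.inv_closed monoid.m_assoc group.is_monoid group.l_inv monoid.r_one)
    then show False using h ne assms by (simp add: group.is_monoid monoid.l_one)
  qed
qed

lemma finite_E: "simple_graph n E \<Longrightarrow> finite E"
  unfolding simple_graph_def by (meson finite_SigmaI finite_atLeastLessThan finite_subset)

lemma finE1: "finite E \<Longrightarrow> finite {(i, j) \<in> E. P i j}"
  by (rule finite_subset[of _ E]) auto

lemma finE2: "finite E \<Longrightarrow> finite {p. (case p of (i, j) \<Rightarrow> (i, j) \<in> E \<and> P i j) \<and> Q p}"
  by (rule finite_subset[of _ E]) auto

lemma diff_card:
  assumes sg: "simple_graph n E" and gr: "group G" and w: "w \<in> {0..<n} \<rightarrow>\<^sub>E carrier G"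
  shows "card {(i, j) \<in> E. w i \<noteq> w j}
     \<le> 2 * card {(i, j) \<in> E. i > j \<and> w i \<otimes>\<^bsub>G\<^esub> inv\<^bsub>G\<^esub> (w j) \<noteq> \<one>\<^bsub>G\<^esub>}"
proof -
  have fE: "finite E" using finite_E[OF sg] .
  have Esub: "E \<subseteq> {0..<n} \<times> {0..<n}" and sym: "sym E" and irr: "irrefl E"
    using sg unfolding simple_graph_def by auto
  let ?Gt = "{(i, j) \<in> E. i > j \<and> w i \<otimes>\<^bsub>G\<^esub> inv\<^bsub>G\<^esub> (w j) \<noteq> \<one>\<^bsub>G\<^esub>}"
  let ?Gt' = "{(i, j) \<in> E. i > j \<and> w i \<noteq> w j}"
  let ?Lt = "{(i, j) \<in> E. i < j \<and> w i \<noteq> w j}"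
  have eq: "?Gt = ?Gt'"
  proof -
    have "\<And>i j. (i, j) \<in> E \<Longrightarrow> (w i \<otimes>\<^bsub>G\<^esub> inv\<^bsub>G\<^esub> (w j) \<noteq> \<one>\<^bsub>G\<^esub>) = (w i \<noteq> w j)"
      using Esub w gr by (intro grp_neq) auto
    then show ?thesis by auto
  qed
  have "{(i, j) \<in> E. w i \<noteq> w j} \<subseteq> ?Gt' \<union> ?Lt"
    using irr unfolding irrefl_def by auto (metis linorder_neqE_nat)
  then have "card {(i, j) \<in> E. w i \<noteq> w j} \<le> card (?Gt' \<union> ?Lt)"
    by (intro card_mono) (auto intro: finite_subset[OF _ fE])
  also have "\<dots> \<le> card ?Gt' + card ?Lt" by (rule card_Un_le)
  also have "card ?Lt \<le> card ?Gt'"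
  proof -
    have "?Lt \<subseteq> prod.swap ` ?Gt'"
    proof
      fix p assume "p \<in> ?Lt"
      then obtain i j where p: "p = (i, j)" "(i, j) \<in> E" "i < j" "w i \<noteq> w j" by auto
      then have "(j, i) \<in> ?Gt'" using sym unfolding sym_def by auto
      then show "p \<in> prod.swap ` ?Gt'" using p by force
    qed
    then have "card ?Lt \<le> card (prod.swap ` ?Gt')" by (intro card_mono) (auto intro: finite_subset[OF _ fE])
    also have "\<dots> \<le> card ?Gt'" by (rule card_image_le) (use fE in \<open>auto intro: finE1\<close>)
    finally show ?thesis .
  qed
  finally show ?thesis using eq by simp
qed

lemma cut_sum:
  assumes sg: "simple_graph n E"
  shows "(\<Sum>a\<in>w ` {0..<n}. cut_size n E {x\<in>{0..<n}. w x = a}) \<le> card {(i, j) \<in> E. w i \<noteq> w j}"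
proof -
  have fE: "finite E" using finite_E[OF sg] .
  define B where "B a = {p \<in> {(i, j) \<in> E. w i \<noteq> w j}. w (fst p) = a}" for a
  have "(\<Sum>a\<in>w ` {0..<n}. cut_size n E {x\<in>{0..<n}. w x = a}) \<le> (\<Sum>a\<in>w ` {0..<n}. card (B a))"
  proof (intro sum_mono)
    fix a
    have "{(i, j) \<in> E. i \<in> {x\<in>{0..<n}. w x = a} \<and> j \<in> {0..<n} - {x\<in>{0..<n}. w x = a}} \<subseteq> B a"
      unfolding B_def by auto
    then show "cut_size n E {x\<in>{0..<n}. w x = a} \<le> card (B a)"
      unfolding cut_size_def B_def by (intro card_mono) (auto intro: finite_subset[OF _ fE])
  qed
  also have "\<dots> = card (\<Union>a\<in>w ` {0..<n}. B a)"
    by (rule card_UN_disjoint[symmetric]) (use fE in \<open>auto simp: B_def intro: finE2\<close>)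
  also have "\<dots> \<le> card {(i, j) \<in> E. w i \<noteq> w j}"
    by (rule card_mono) (use fE in \<open>auto simp: B_def intro: finE1\<close>)
  finally show ?thesis .
qed

lemma cut_ge:
  assumes "S \<noteq> {}" "S \<subset> {0..<n}"
  shows "mincut n E \<le> cut_size n E S"
proof -
  have "finite {cut_size n E S | S. S \<noteq> {} \<and> S \<subset> {0..<n}}"
  proof -
    have "{cut_size n E S | S. S \<noteq> {} \<and> S \<subset> {0..<n}} \<subseteq> cut_size n E ` Pow {0..<n}" by auto
    then show ?thesis by (rule finite_subset) auto
  qed
  then show ?thesis unfolding mincut_def using assms by (intro Min_le) auto
qed



lemma key:
  assumes sg: "simple_graph n E" and gr: "group G" and k: "k \<ge> 1" and mc: "mincut n E \<ge> 1"
    and wA: "w \<in> A_set G n E k"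
  shows "card (w ` {0..<n}) \<le> 2 * k - 1"
    and "(\<Sum>a\<in>w ` {0..<n}. cut_size n E {x\<in>{0..<n}. w x = a} div mincut n E) \<le> 2 * k - 1"
proof -
  let ?V = "{0..<n}"
  let ?c = "\<lambda>a. cut_size n E {x\<in>?V. w x = a}"
  let ?mc = "mincut n E"
  have w: "w \<in> ?V \<rightarrow>\<^sub>E carrier G" and D: "card {(i, j) \<in> E. i > j \<and> w i \<otimes>\<^bsub>G\<^esub> inv\<^bsub>G\<^esub> (w j) \<noteq> \<one>\<^bsub>G\<^esub>} < k * ?mc"
    using wA unfolding A_set_def by auto
  have sumc: "(\<Sum>a\<in>w ` ?V. ?c a) < 2 * k * ?mc"
    using cut_sum[OF sg, of w] diff_card[OF sg gr w] D by linarith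
  have "?mc * (\<Sum>a\<in>w ` ?V. ?c a div ?mc) = (\<Sum>a\<in>w ` ?V. ?mc * (?c a div ?mc))"
    by (simp add: sum_distrib_left)
  also have "\<dots> \<le> (\<Sum>a\<in>w ` ?V. ?c a)"
    by (intro sum_mono) (simp add: mult.commute div_times_less_eq_dividend)
  finally have le1: "?mc * (\<Sum>a\<in>w ` ?V. ?c a div ?mc) \<le> (\<Sum>a\<in>w ` ?V. ?c a)" .
  have "?mc * (\<Sum>a\<in>w ` ?V. ?c a div ?mc) < ?mc * (2 * k)"
    using le_less_trans[OF le1 sumc] by (simp add: mult.commute mult.left_commute)
  then have "(\<Sum>a\<in>w ` ?V. ?c a div ?mc) < 2 * k" by (simp only: mult_less_cancel1)
  then show "(\<Sum>a\<in>w ` ?V. ?c a div ?mc) \<le> 2 * k - 1" by linarith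
  show "card (w ` ?V) \<le> 2 * k - 1"
  proof (cases "card (w ` ?V) \<ge> 2")
    case False then show ?thesis using k by linarith
  next
    case True
    have ge: "?mc \<le> ?c a" if a: "a \<in> w ` ?V" for a
    proof (rule cut_ge)
      show "{x\<in>?V. w x = a} \<noteq> {}" using a by auto
      obtain b where b: "b \<in> w ` ?V" "b \<noteq> a"
      proof -
        have "\<not> (w ` ?V \<subseteq> {a})"
        proof
          assume "w ` ?V \<subseteq> {a}"
          then have "card (w ` ?V) \<le> card {a}" by (intro card_mono) auto
          then show False using True by simp
        qed
        then show ?thesis using that by blast
      qed
      then show "{x\<in>?V. w x = a} \<subset> ?V" by auto
    qed
    have "card (w ` ?V) * ?mc = (\<Sum>a\<in>w ` ?V. ?mc)" by simp
    also have "\<dots> \<le> (\<Sum>a\<in>w ` ?V. ?c a)" using ge by (intro sum_mono) auto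
    finally have "card (w ` ?V) * ?mc < (2 * k) * ?mc" using sumc by linarith
    then have "card (w ` ?V) < 2 * k" by (simp only: mult_less_cancel2)
    then show ?thesis by linarith
  qed
qed



lemma count_bound:
  assumes sg: "simple_graph n E" and gr: "group G" and carr: "carrier G = {0..<M}" and M: "M \<ge> 1"
    and k: "k \<ge> 1" and mc: "mincut n E \<ge> 1" and q0: "q > 0" and q1: "q \<le> 1"
    and hS: "(\<Sum>S\<in>Pow {0..<n}. q ^ (cut_size n E S div mincut n E + 1)) \<le> 1"
  shows "real (card (A_set G n E k)) * q ^ (2 * (2 * k - 1)) \<le> real M ^ (2 * k - 1)"
proof -
  let ?V = "{0..<n}"
  define m where "m = 2 * k - 1"
  define jf where "jf S = cut_size n E S div mincut n E + 1" for S
  define vs where "vs w = sorted_list_of_set (w ` ?V)" for w :: "nat \<Rightarrow> nat"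
  define Sa where "Sa w a = {x\<in>?V. w x = a}" for w :: "nat \<Rightarrow> nat" and a
  define enc where "enc w = (\<lambda>i\<in>{0..<m}. if i < length (vs w) then (vs w ! i, Sa w (vs w ! i)) else (0, {}))"
    for w :: "nat \<Rightarrow> nat"
  define P where "P = {0..<m} \<rightarrow>\<^sub>E ({0..<M} \<times> Pow ?V)"
  define wt where "wt t = (\<Prod>i\<in>{0..<m}. q ^ jf (snd (t i)))" for t :: "nat \<Rightarrow> nat \<times> nat set"
  define A where "A = A_set G n E k"
  have fin: "finite (w ` ?V)" for w :: "nat \<Rightarrow> nat" by simp
  have setvs: "set (vs w) = w ` ?V" for w unfolding vs_def by simp
  have distvs: "distinct (vs w)" for w unfolding vs_def by simp
  have lenvs: "length (vs w) = card (w ` ?V)" for w unfolding vs_def by simp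
  have wA: "w \<in> ?V \<rightarrow>\<^sub>E carrier G" if "w \<in> A" for w using that unfolding A_def A_set_def by auto
  have lenm: "length (vs w) \<le> m" if "w \<in> A" for w
    using key(1)[OF sg gr k mc, of w] that unfolding A_def m_def lenvs by simp
  have encP: "enc ` A \<subseteq> P"
  proof
    fix t assume "t \<in> enc ` A"
    then obtain w where w: "w \<in> A" and t: "t = enc w" by auto
    have "vs w ! i \<in> {0..<M}" if "i < length (vs w)" for i
    proof -
      have "vs w ! i \<in> w ` ?V" using that setvs nth_mem by metis
      then show ?thesis using wA[OF w] carr by auto
    qed
    then show "t \<in> P" unfolding t P_def enc_def Sa_def using M by auto
  qed
  have inj: "inj_on enc A"
  proof (rule inj_onI)
    fix w w' assume w: "w \<in> A" and w': "w' \<in> A" and eq: "enc w = enc w'"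
    show "w = w'"
    proof (rule PiE_ext[OF wA[OF w] wA[OF w']])
      fix x assume x: "x \<in> ?V"
      have "w x \<in> set (vs w)" using x setvs by auto
      then obtain i where i: "i < length (vs w)" "vs w ! i = w x" by (metis in_set_conv_nth)
      have im: "i \<in> {0..<m}" using i lenm[OF w] by auto
      have e1: "enc w i = (w x, Sa w (w x))" using i im unfolding enc_def by simp
      have xin: "x \<in> Sa w (w x)" using x unfolding Sa_def by simp
      show "w x = w' x"
      proof (cases "i < length (vs w')")
        case True
        then have "enc w' i = (vs w' ! i, Sa w' (vs w' ! i))" using im unfolding enc_def by simp
        moreover have "enc w' i = (w x, Sa w (w x))" using e1 eq by simp
        ultimately have pe: "(vs w' ! i, Sa w' (vs w' ! i)) = (w x, Sa w (w x))" by metis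
        have h1: "vs w' ! i = w x" using pe by (metis prod.inject)
        have h2: "Sa w' (vs w' ! i) = Sa w (w x)" using pe by (metis prod.inject)
        have "x \<in> Sa w' (w x)" using xin h1 h2 by metis
        then show ?thesis unfolding Sa_def by simp
      next
        case False
        then have "enc w' i = (0, {})" using im unfolding enc_def by simp
        moreover have "enc w' i = (w x, Sa w (w x))" using e1 eq by simp
        ultimately have "Sa w (w x) = {}" by (metis prod.inject)
        then show ?thesis using xin by blast
      qed
    qed
  qed
  have wt0: "wt t \<ge> 0" for t unfolding wt_def using q0 by (intro prod_nonneg) auto
  have wtA: "wt (enc w) \<ge> q ^ (2 * m)" if w: "w \<in> A" for w
  proof -
    let ?r = "length (vs w)"
    have r: "?r \<le> m" using lenm[OF w] .
    have "wt (enc w) = q ^ (\<Sum>i\<in>{0..<m}. jf (snd (enc w i)))"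
      unfolding wt_def power_sum by simp
    also have "(\<Sum>i\<in>{0..<m}. jf (snd (enc w i))) = (\<Sum>i\<in>{0..<?r}. jf (snd (enc w i))) + (\<Sum>i\<in>{?r..<m}. jf (snd (enc w i)))"
      using r by (simp add: sum.atLeastLessThan_concat)
    also have "(\<Sum>i\<in>{?r..<m}. jf (snd (enc w i))) = m - ?r"
    proof -
      have "(\<Sum>i\<in>{?r..<m}. jf (snd (enc w i))) = (\<Sum>i\<in>{?r..<m}. 1)"
        by (intro sum.cong refl) (auto simp: enc_def jf_def cut_size_def)
      then show ?thesis by simp
    qed
    also have "(\<Sum>i\<in>{0..<?r}. jf (snd (enc w i))) = (\<Sum>i\<in>{0..<?r}. jf (Sa w (vs w ! i)))"
      using r by (intro sum.cong refl) (auto simp: enc_def)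
    also have "\<dots> = (\<Sum>a\<in>w ` ?V. jf (Sa w a))"
    proof -
      have "bij_betw ((!) (vs w)) {0..<?r} (w ` ?V)"
        using bij_betw_nth[OF distvs, of "{..<?r}" w "w ` ?V"] setvs by (simp add: lessThan_atLeast0)
      then show ?thesis by (rule sum.reindex_bij_betw)
    qed
    also have "\<dots> = (\<Sum>a\<in>w ` ?V. cut_size n E {x\<in>?V. w x = a} div mincut n E) + card (w ` ?V)"
      unfolding jf_def Sa_def sum.distrib by simp
    finally have "wt (enc w) = q ^ ((\<Sum>a\<in>w ` ?V. cut_size n E {x\<in>?V. w x = a} div mincut n E) + card (w ` ?V) + (m - ?r))" .
    moreover have "(\<Sum>a\<in>w ` ?V. cut_size n E {x\<in>?V. w x = a} div mincut n E) + card (w ` ?V) + (m - ?r) \<le> 2 * m"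
      using key(2)[OF sg gr k mc, of w] w r lenvs unfolding A_def m_def by simp
    ultimately show ?thesis using q0 q1 by (simp add: power_decreasing)
  qed
  have sumP: "(\<Sum>t\<in>P. wt t) \<le> real M ^ m"
  proof -
    have "(\<Sum>t\<in>P. wt t) = (\<Prod>i\<in>{0..<m}. \<Sum>p\<in>{0..<M} \<times> Pow ?V. q ^ jf (snd p))"
      unfolding P_def wt_def by (rule prod_sum_PiE[symmetric]) auto
    also have "\<dots> \<le> (\<Prod>i\<in>{0..<m}. real M)"
    proof (intro prod_mono conjI)
      fix i
      have "(\<Sum>p\<in>{0..<M} \<times> Pow ?V. q ^ jf (snd p)) = (\<Sum>x\<in>{0..<M}. \<Sum>S\<in>Pow ?V. q ^ jf S)"
        unfolding sum.cartesian_product by (intro sum.cong) auto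
      also have "\<dots> = real M * (\<Sum>S\<in>Pow ?V. q ^ jf S)" by simp
      also have "\<dots> \<le> real M * 1" using hS unfolding jf_def by (intro mult_left_mono) auto
      finally show "(\<Sum>p\<in>{0..<M} \<times> Pow ?V. q ^ jf (snd p)) \<le> real M" by simp
      show "0 \<le> (\<Sum>p\<in>{0..<M} \<times> Pow ?V. q ^ jf (snd p))" using q0 by (intro sum_nonneg) auto
    qed
    finally show ?thesis by simp
  qed
  have fP: "finite P" unfolding P_def by (intro finite_PiE) auto
  have "real (card A) * q ^ (2 * m) = real (card (enc ` A)) * q ^ (2 * m)"
    using card_image[OF inj] by simp
  also have "\<dots> = (\<Sum>t\<in>enc ` A. q ^ (2 * m))" by simp
  also have "\<dots> \<le> (\<Sum>t\<in>enc ` A. wt t)" using wtA by (intro sum_mono) auto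
  also have "\<dots> \<le> (\<Sum>t\<in>P. wt t)" using encP fP wt0 by (intro sum_mono2) auto
  also have "\<dots> \<le> real M ^ m" by (rule sumP)
  finally show ?thesis unfolding A_def m_def .
qed



theorem lemma3:
  fixes G :: "(nat, 'b) monoid_scheme" and n M k :: nat and E :: "(nat \<times> nat) set"
  assumes "simple_graph n E" and "graph_connected n E" and "n \<ge> 2"
    and "M \<ge> 2" and "group G" and "carrier G = {0..<M}"
    and "k \<ge> 1" and "real k \<le> real n ^ 2 / real (mincut n E)"
  shows "ln (real (card (A_set G n E k))) / real k
           < 2 * ln (real M) + 2 * ln (2 * real k * real (mincut n E)) + 4 * tau_cut n E
       \<and> 2 * ln (real M) + 2 * ln (2 * real k * real (mincut n E)) + 4 * tau_cut n E
           \<le> 2 * ln (real M) + 4 * ln (2 * real n) + 4 * tau_cut n E"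
proof -
  note sg = assms(1) and gr = assms(5) and carr = assms(6) and k = assms(7)
  let ?mc = "mincut n E"
  let ?t = "tau_cut n E"
  have mc: "?mc \<ge> 1"
  proof (rule ccontr)
    assume "\<not> ?mc \<ge> 1"
    then have "?mc = 0" by simp
    then show False using assms(8) k by simp
  qed
  have kmc: "real k * real ?mc \<le> real n ^ 2"
    using assms(8) mc by (simp add: le_divide_eq)
  have tau0: "?t \<ge> 0" by (rule tau_facts(1)[OF sg])
  define q where "q = exp (- ?t) / 2"
  have q0: "q > 0" unfolding q_def by simp
  have q1: "q \<le> 1" unfolding q_def using tau0 by (simp add: exp_le_one_iff[of "- ?t"] order_trans[OF _ one_le_numeral])
  have lnq: "ln q = - ?t - ln 2" unfolding q_def by (simp add: ln_div)
  have hS: "(\<Sum>S\<in>Pow {0..<n}. q ^ (cut_size n E S div ?mc + 1)) \<le> 1"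
    unfolding q_def by (rule sum_weight[OF sg mc])
  have M1: "M \<ge> 1" using assms(4) by simp
  have cb: "real (card (A_set G n E k)) * q ^ (2 * (2 * k - 1)) \<le> real M ^ (2 * k - 1)"
    by (rule count_bound[OF sg gr carr M1 k mc q0 q1 hS])
  have C1: "card (A_set G n E k) \<ge> 1"
  proof -
    obtain a where a: "a \<in> carrier G" "a \<noteq> \<one>\<^bsub>G\<^esub>"
    proof (cases "\<one>\<^bsub>G\<^esub> = (0::nat)")
      case True then show ?thesis using that[of 1] carr assms(4) by auto
    next
      case False then show ?thesis using that[of 0] carr assms(4) by auto
    qed
    define w where "w = (\<lambda>i\<in>{0..<n}. a)"
    have Esub: "E \<subseteq> {0..<n} \<times> {0..<n}" using sg unfolding simple_graph_def by auto
    have empt: "{(i, j) \<in> E. i > j \<and> w i \<otimes>\<^bsub>G\<^esub> inv\<^bsub>G\<^esub> (w j) \<noteq> \<one>\<^bsub>G\<^esub>} = {}"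
      using Esub a gr unfolding w_def by (auto simp: group.r_inv)
    have kpos: "0 < k * ?mc" using k mc by simp
    have wP: "w \<in> {0..<n} \<rightarrow>\<^sub>E carrier G" unfolding w_def using a by auto
    have w0: "\<exists>i<n. w i \<noteq> \<one>\<^bsub>G\<^esub>" using assms(3) a unfolding w_def by (intro exI[of _ 0]) auto
    have "w \<in> A_set G n E k"
      unfolding A_set_def using wP w0 kpos by (simp only: empt card.empty mem_Collect_eq)
    moreover have "finite (A_set G n E k)"
    proof (rule finite_subset)
      show "A_set G n E k \<subseteq> {0..<n} \<rightarrow>\<^sub>E carrier G" unfolding A_set_def by auto
      show "finite ({0..<n} \<rightarrow>\<^sub>E carrier G)" using carr by (intro finite_PiE) auto
    qed
    ultimately show ?thesis by (metis One_nat_def Suc_leI card_gt_0_iff empty_iff)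
  qed
  define C where "C = real (card (A_set G n E k))"
  have Cpos: "C > 0" using C1 unfolding C_def by simp
  have Mpos: "real M > 0" and lnM: "ln (real M) > 0" using assms(4) by auto
  have mk: "real (2 * k - 1) = 2 * real k - 1" using k by (simp add: of_nat_diff)
  have mk2: "real (2 * (2 * k - 1)) = 4 * real k - 2" using k by (simp add: of_nat_diff)
  have "ln (C * q ^ (2 * (2 * k - 1))) \<le> ln (real M ^ (2 * k - 1))"
    using cb Cpos q0 Mpos unfolding C_def by (subst ln_le_cancel_iff) auto
  then have "ln C + real (2 * (2 * k - 1)) * ln q \<le> real (2 * k - 1) * ln (real M)"
    using Cpos q0 Mpos by (simp add: ln_mult ln_realpow)
  then have lnC: "ln C \<le> (2 * real k - 1) * ln (real M) + (4 * real k - 2) * (?t + ln 2)"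
    unfolding lnq mk mk2 by (simp add: algebra_simps)
  have km1n: "1 \<le> k * ?mc" using k mc by (simp add: Suc_le_eq)
  have km1: "1 \<le> real k * real ?mc" using km1n by (metis of_nat_1 of_nat_le_iff of_nat_mult)
  have kmpos: "0 < 2 * real k * real ?mc" using km1 by simp
  have l2: "ln (2 * real k * real ?mc) \<ge> ln 2"
    using km1 kmpos by (subst ln_le_cancel_iff) (auto simp: mult.assoc)
  have ln2: "ln (2::real) > 0" by simp
  have main: "ln C < real k * (2 * ln (real M) + 2 * ln (2 * real k * real ?mc) + 4 * ?t)"
  proof (cases "k = 1")
    case True
    then show ?thesis using lnC l2 tau0 lnM by simp
  next
    case False
    then have k2: "real k \<ge> 2" using k by simp
    have "ln (2 * real k * real ?mc) \<ge> ln 4"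
    proof -
      have "real k * 1 \<le> real k * real ?mc" using mc k2 by (intro mult_left_mono) auto
      then have "4 \<le> 2 * (real k * real ?mc)" using k2 by linarith
      then have "4 \<le> 2 * real k * real ?mc" by (simp only: mult.assoc)
      then show ?thesis using kmpos by (subst ln_le_cancel_iff) auto
    qed
    moreover have "ln (4::real) = 2 * ln 2"
      using ln_realpow[of "2::real" 2] by simp
    ultimately have "ln (2 * real k * real ?mc) \<ge> 2 * ln 2" by simp
    then have h: "real k * ln (2 * real k * real ?mc) \<ge> real k * (2 * ln 2)"
      using k2 by (intro mult_left_mono) auto
    have e1: "real k * (2 * ln (real M) + 2 * ln (2 * real k * real ?mc) + 4 * ?t)
      = 2 * (real k * ln (real M)) + 2 * (real k * ln (2 * real k * real ?mc)) + 4 * (real k * ?t)"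
      by (simp add: algebra_simps)
    have e2: "(2 * real k - 1) * ln (real M) + (4 * real k - 2) * (?t + ln 2)
      = 2 * (real k * ln (real M)) - ln (real M) + 4 * (real k * ?t) + 2 * (real k * (2 * ln 2)) - 2 * ?t - 2 * ln 2"
      by (simp add: algebra_simps)
    show ?thesis unfolding e1 using lnC e2 h tau0 lnM ln2 by linarith
  qed
  have part1: "ln C / real k < 2 * ln (real M) + 2 * ln (2 * real k * real ?mc) + 4 * ?t"
    using main k by (simp add: divide_less_eq mult.commute)
  have part2: "ln (2 * real k * real ?mc) \<le> 2 * ln (2 * real n)"
  proof -
    have nn: "0 \<le> real n * real n" by simp
    have "2 * real k * real ?mc \<le> (2 * real n) ^ 2"
      unfolding power2_eq_square using kmc nn unfolding power2_eq_square by (simp only: mult.assoc mult.left_commute)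
    then have "ln (2 * real k * real ?mc) \<le> ln ((2 * real n) ^ 2)"
      using kmpos assms(3) by (subst ln_le_cancel_iff) auto
    also have "\<dots> = 2 * ln (2 * real n)" using assms(3) ln_realpow[of "2 * real n" 2] by (simp del: power_mult_distrib)
    finally show ?thesis .
  qed
  show ?thesis using part1 part2 unfolding C_def by simp
qed


end
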